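(* Let $F$ be a nonempty face of $V_0$ and $\lambda\in\Xi$. Then $\lambda\in\mathcal U(F)$ (i.e. $F\subseteq F_\lambda$) if and only if $N_\lambda\ge\phi(F)$ in $\mathcal{SC}(\mathcal M)$.
   Context: Let $\mathcal M$ be a regular matroid on a finite ground set $E$, represented by a totally unimodular matrix $M$ with columns $c_e$; $\mathcal F=\ker M\subseteq\mathbb R^E$ with Euclidean inner product, $\Lambda=\ker M\cap\mathbb Z^E$, $V_0=\{x\in\mathcal F:\|x\|\le\|x-\mu\|\ \forall\mu\in\Lambda\}$. A circuit in $\Lambda$ is a flow with coordinates in $\{-1,0,1\}$ whose support is a circuit (minimal dependent set of columns) of $\mathcal M$; $\Xi$ is the set of these. For $\gamma\in\Xi$, $F_\gamma=\{x\in\mathcal F:2\langle x,\gamma\rangle=\|\gamma\|^2\}$. An oriented submatroid is $(S,\varepsilon)$, $S\subseteq E$, $\varepsilon:S\to\{\pm1\}$; it is strongly connected if for every $e\in S$ there is $w\in\mathbb Z_{\ge0}^S$ with $w_e\ge1$ and $\sum_{f\in S}w_f\varepsilon_fc_f=0$. $\mathcal{SC}(\mathcal M)$ is the set of these, ordered by $(S,\varepsilon)\le(S',\varepsilon')$ iff $S'\subseteq S$ and $\varepsilon'=\varepsilon|_{S'}$. For $\lambda\in\Lambda$, $N_\lambda=(\operatorname{supp}\lambda,\ e\mapsto\operatorname{sgn}\lambda_e)$. For a nonempty face $F$ of $V_0$, $\mathcal U(F)=\{\gamma\in\Xi:F\subseteq F_\gamma\}$ and $\phi(F)=(S,\varepsilon)$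 with $S=\bigcup_{\gamma\in\mathcal U(F)}\operatorname{supp}\gamma$ and $\varepsilon_e=\operatorname{sgn}\gamma_e$ for any $\gamma\in\mathcal U(F)$ with $e\in\operatorname{supp}\gamma$ (this is well defined and lies in $\mathcal{SC}(\mathcal M)$). *)

theory Defs
  imports "HOL-Analysis.Analysis"
begin

text \<open>The ground set E is the finite type 'e (so E = UNIV);
 the matrix M has rows indexed by the finite type 'r and columns c_e = column e M.\<close>

definition det_sq :: "nat \<Rightarrow> (nat \<Rightarrow> nat \<Rightarrow> real) \<Rightarrow> real" where
  "det_sq k A = (\<Sum>p | p permutes {..<k}. of_int (sign p) * (\<Prod>i<k. A i (p i)))"

definition totally_unimodular :: "real^'e^'r \<Rightarrow> bool" where
  "totally_unimodular M \<longleftrightarrow>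
     (\<forall>k (f::nat \<Rightarrow> 'r) (g::nat \<Rightarrow> 'e). inj_on f {..<k} \<longrightarrow> inj_on g {..<k} \<longrightarrow>
        det_sq k (\<lambda>i j. M $ f i $ g j) \<in> {-1, 0, 1})"

definition flows :: "real^'e^'r \<Rightarrow> (real^'e) set" where
  "flows M = {x. M *v x = 0}"

definition lattice_flows :: "real^'e^'r \<Rightarrow> (real^'e) set" where
  "lattice_flows M = {x \<in> flows M. \<forall>e. x $ e \<in> \<int>}"

definition voronoi0 :: "real^'e^'r \<Rightarrow> (real^'e) set" where
  "voronoi0 M = {x \<in> flows M. \<forall>\<mu> \<in> lattice_flows M. norm x \<le> norm (x - \<mu>)}"

definition supp :: "real^'e \<Rightarrow> 'e set" where
  "supp x = {e. x $ e \<noteq> 0}"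

definition dependent_cols :: "real^'e^'r \<Rightarrow> 'e set \<Rightarrow> bool" where
  "dependent_cols M S \<longleftrightarrow>
     (\<exists>w :: 'e \<Rightarrow> real. (\<exists>e\<in>S. w e \<noteq> 0) \<and> (\<Sum>e\<in>S. w e *\<^sub>R column e M) = 0)"

definition matroid_circuit :: "real^'e^'r \<Rightarrow> 'e set \<Rightarrow> bool" where
  "matroid_circuit M S \<longleftrightarrow> dependent_cols M S \<and> (\<forall>T. T \<subset> S \<longrightarrow> \<not> dependent_cols M T)"

definition circuits :: "real^'e^'r \<Rightarrow> (real^'e) set" where
  "circuits M = {\<gamma> \<in> lattice_flows M. (\<forall>e. \<gamma> $ e \<in> {-1, 0, 1}) \<and> matroid_circuit M (supp \<gamma>)}"

definition hyperplane_F :: "real^'e^'r \<Rightarrow> real^'e \<Rightarrow> (real^'e) set" where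
  "hyperplane_F M \<gamma> = {x \<in> flows M. 2 * (x \<bullet> \<gamma>) = (norm \<gamma>)\<^sup>2}"

definition U_face :: "real^'e^'r \<Rightarrow> (real^'e) set \<Rightarrow> (real^'e) set" where
  "U_face M F = {\<gamma> \<in> circuits M. F \<subseteq> hyperplane_F M \<gamma>}"

text \<open>Oriented submatroids are pairs (S, eps); only the values of eps on S matter.\<close>
type_synonym 'e osub = "'e set \<times> ('e \<Rightarrow> real)"

definition strongly_connected :: "real^'e^'r \<Rightarrow> 'e osub \<Rightarrow> bool" where
  "strongly_connected M N \<longleftrightarrow> (case N of (S, eps) \<Rightarrow>
     (\<forall>e\<in>S. eps e \<in> {-1, 1}) \<and>
     (\<forall>e\<in>S. \<exists>w :: 'e \<Rightarrow> nat. w e \<ge> 1 \<and>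
         (\<Sum>f\<in>S. (real (w f) * eps f) *\<^sub>R column f M) = 0))"

definition SC :: "real^'e^'r \<Rightarrow> 'e osub set" where
  "SC M = {N. strongly_connected M N}"

definition sc_le :: "'e osub \<Rightarrow> 'e osub \<Rightarrow> bool" where
  "sc_le N N' \<longleftrightarrow> (case N of (S, eps) \<Rightarrow> case N' of (S', eps') \<Rightarrow>
     S' \<subseteq> S \<and> (\<forall>e\<in>S'. eps' e = eps e))"

definition N_of :: "real^'e \<Rightarrow> 'e osub" where
  "N_of lam = (supp lam, \<lambda>e. sgn (lam $ e))"

definition phi :: "real^'e^'r \<Rightarrow> (real^'e) set \<Rightarrow> 'e osub" where
  "phi M F = (\<Union>\<gamma>\<in>U_face M F. supp \<gamma>,
     \<lambda>e. if e \<in> (\<Union>\<gamma>\<in>U_face M F. supp \<gamma>)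
          then sgn ((SOME \<gamma>. \<gamma> \<in> U_face M F \<and> e \<in> supp \<gamma>) $ e) else 0)"

end

theory Submission
  imports Defs "Jordan_Normal_Form.Determinant"
begin

no_notation Matrix.vec_index (infixl \<open>$\<close> 100)
no_notation Matrix.scalar_prod (infix \<open>\<bullet>\<close> 70)


lemma det_sq_det: "Determinant.det (Matrix.mat k k (\<lambda>(i,j). A i j)) = det_sq k A"
proof -
  have "Determinant.det (Matrix.mat k k (\<lambda>(i,j). A i j)) =
    (\<Sum> p \<in> {p. p permutes {0 ..< k}}. signof p * (\<Prod> i = 0 ..< k. Matrix.mat k k (\<lambda>(i,j). A i j) $$ (i, p i)))"
    by (rule det_def') auto
  also have "\<dots> = det_sq k A"
    unfolding det_sq_def lessThan_atLeast0
    by (intro sum.cong refl arg_cong2[where f="(*)"] prod.cong)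
       (auto intro!: index_mat simp: permutes_in_image)
  finally show ?thesis .
qed

lemma row_select:
  fixes v :: "nat \<Rightarrow> real^'r"
  assumes "\<forall>w. (\<Sum>j<k. w j *\<^sub>R v j) = 0 \<longrightarrow> (\<forall>j<k. w j = 0)"
  shows "\<exists>f. Determinant.det (Matrix.mat k k (\<lambda>(i,j). v j $ f i)) \<noteq> 0"
  using assms
proof (induction k)
  case 0
  have "Determinant.det (Matrix.mat 0 0 (\<lambda>(i,j). v j $ f i)) = 1" for f
    by (simp add: det_sq_det det_sq_def)
  then show ?case by auto
next
  case (Suc k)
  have "\<forall>w. (\<Sum>j<k. w j *\<^sub>R v j) = 0 \<longrightarrow> (\<forall>j<k. w j = 0)"
  proof (intro allI impI)
    fix w :: "nat \<Rightarrow> real" and j assume w: "(\<Sum>j<k. w j *\<^sub>R v j) = 0" and j: "j < k"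
    have "(\<Sum>j<Suc k. (w(k:=0)) j *\<^sub>R v j) = 0" using w by simp
    with Suc.prems j show "w j = 0" by (metis fun_upd_other less_SucI less_irrefl_nat)
  qed
  then obtain f where f: "Determinant.det (Matrix.mat k k (\<lambda>(i,j). v j $ f i)) \<noteq> 0"
    using Suc.IH by blast
  define c where "c b = (-1)^(k+b) * Determinant.det (Matrix.mat k k (\<lambda>(i',j'). v (if j' < b then j' else Suc j') $ f i'))" for b
  show ?case
  proof (rule ccontr)
    assume "\<not> ?thesis"
    hence B0: "Determinant.det (Matrix.mat (Suc k) (Suc k) (\<lambda>(a,b). v b $ (f(k:=i)) a)) = 0" for i
      by blast
    have "(\<Sum>b<Suc k. c b *\<^sub>R v b) = 0"
    proof (subst Finite_Cartesian_Product.vec_eq_iff, rule allI)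
      fix i
      let ?B = "Matrix.mat (Suc k) (Suc k) (\<lambda>(a,b). v b $ (f(k:=i)) a)"
      have "0 = Determinant.det ?B" using B0 by simp
      also have "\<dots> = (\<Sum>b<Suc k. ?B $$ (k,b) * cofactor ?B k b)"
        by (rule laplace_expansion_row) auto
      also have "\<dots> = (\<Sum>b<Suc k. c b * v b $ i)"
      proof (rule sum.cong[OF refl])
        fix b assume b: "b \<in> {..<Suc k}"
        have "mat_delete ?B k b = Matrix.mat k k (\<lambda>(i',j'). v (if j' < b then j' else Suc j') $ f i')"
          unfolding mat_delete_def by (rule cong_mat) auto
        then show "?B $$ (k,b) * cofactor ?B k b = c b * v b $ i"
          using b unfolding cofactor_def c_def by simp
      qed
      finally show "(\<Sum>b<Suc k. c b *\<^sub>R v b) $ i = 0 $ i" by (simp add: mult.commute)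
    qed
    with Suc.prems have "c k = 0" by blast
    moreover have "c k = Determinant.det (Matrix.mat k k (\<lambda>(i,j). v j $ f i))"
    proof -
      have "Matrix.mat k k (\<lambda>(i',j'). v (if j' < k then j' else Suc j') $ f i') = Matrix.mat k k (\<lambda>(i,j). v j $ f i)"
        by (rule cong_mat) auto
      moreover have "(-1::real)^(k+k) = 1" by (simp add: mult_2[symmetric])
      ultimately show ?thesis unfolding c_def by simp
    qed
    ultimately show False using f by simp
  qed
qed

lemma det_inj:
  assumes "Determinant.det (Matrix.mat k k (\<lambda>(i,j). a (f i) j)) \<noteq> (0::real)"
  shows "inj_on f {..<k}"
proof (rule inj_onI, rule ccontr)
  fix i j assume i: "i \<in> {..<k}" and j: "j \<in> {..<k}" and e: "f i = f j" and ne: "i \<noteq> j"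
  have "Determinant.det (Matrix.mat k k (\<lambda>(i,j). a (f i) j)) = 0"
    by (rule det_identical_rows[of _ k i j]) (use i j e ne in \<open>auto intro!: eq_vecI\<close>)
  with assms show False by simp
qed



lemma tu_det:
  fixes M :: "real^'e::finite^'r::finite"
  assumes "totally_unimodular M" "inj_on f {..<k}" "inj_on g {..<k}"
  shows "Determinant.det (Matrix.mat k k (\<lambda>(i,j). M $ f i $ g j)) \<in> {-1,0,1}"
  using assms det_sq_det[of k "\<lambda>i j. M $ f i $ g j"] unfolding totally_unimodular_def
  by simp

lemma cramer_ratio:
  fixes M :: "real^'e::finite^'r::finite"
  assumes TU: "totally_unimodular M"
    and f: "inj_on f {..<k}" and g: "inj_on g {..<k}" and e0: "e0 \<notin> g ` {..<k}"
    and dA: "Determinant.det (Matrix.mat k k (\<lambda>(i,j). M $ f i $ g j)) \<noteq> 0"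
    and y: "M *v y = 0" and supp: "\<forall>e. e \<notin> insert e0 (g ` {..<k}) \<longrightarrow> y $ e = 0"
    and y0: "y $ e0 \<noteq> 0"
    and j: "j < k"
  shows "y $ g j / y $ e0 \<in> {-1,0,1}"
proof -
  define A where "A = Matrix.mat k k (\<lambda>(i,j). M $ f i $ g j)"
  define x where "x = Matrix.vec k (\<lambda>j. - y $ g j / y $ e0)"
  have row_eq: "(\<Sum>j<k. M $ f i $ g j * y $ g j) = - M $ f i $ e0 * y $ e0" for i
  proof -
    have "0 = (M *v y) $ f i" using y by simp
    also have "\<dots> = (\<Sum>e\<in>UNIV. M $ f i $ e * y $ e)" by (simp add: matrix_vector_mult_def)
    also have "\<dots> = (\<Sum>e\<in>insert e0 (g ` {..<k}). M $ f i $ e * y $ e)"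
      by (rule sum.mono_neutral_right) (auto simp: supp)
    also have "\<dots> = M $ f i $ e0 * y $ e0 + (\<Sum>e\<in>g ` {..<k}. M $ f i $ e * y $ e)"
      using e0 by (simp add: sum.insert)
    also have "(\<Sum>e\<in>g ` {..<k}. M $ f i $ e * y $ e) = (\<Sum>j<k. M $ f i $ g j * y $ g j)"
      by (rule sum.reindex[OF g, unfolded comp_def])
    finally show ?thesis by linarith
  qed
  have Ax: "A *\<^sub>v x = Matrix.vec k (\<lambda>i. M $ f i $ e0)"
  proof (rule eq_vecI)
    fix i assume "i < dim_vec (Matrix.vec k (\<lambda>i. M $ f i $ e0))"
    hence i: "i < k" by simp
    have "vec_index (A *\<^sub>v x) i = (\<Sum>j\<in>{0..<k}. M $ f i $ g j * (- y $ g j / y $ e0))"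
      using i by (simp add: A_def x_def Matrix.scalar_prod_def)
    also have "\<dots> = - (\<Sum>j<k. M $ f i $ g j * y $ g j) / y $ e0"
      by (simp add: lessThan_atLeast0 sum_divide_distrib sum_negf)
    also have "\<dots> = M $ f i $ e0" using row_eq[of i] y0 by simp
    finally show "vec_index (A *\<^sub>v x) i = vec_index (Matrix.vec k (\<lambda>i. M $ f i $ e0)) i"
      using i by simp
  qed (simp add: A_def)
  have R: "replace_col A (A *\<^sub>v x) j = Matrix.mat k k (\<lambda>(i,j'). M $ f i $ (g(j:=e0)) j')"
    unfolding replace_col_def Ax by (rule eq_matI) (auto simp: A_def)
  have cr: "Determinant.det (replace_col A (A *\<^sub>v x) j) = vec_index x j * Determinant.det A"
    by (rule cramer_lemma_mat) (auto simp: A_def x_def j)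
  have g': "inj_on (g(j:=e0)) {..<k}"
    by (rule inj_on_fun_updI[OF g e0])
  have d1: "Determinant.det A \<in> {-1,1}" using tu_det[OF TU f g] dA unfolding A_def by auto
  have d2: "vec_index x j * Determinant.det A \<in> {-1,0,1}"
    using tu_det[OF TU f g'] cr R by simp
  have "vec_index x j \<in> {-1,0,1}" using d1 d2 by auto
  hence "- y $ g j / y $ e0 \<in> {-1,0,1}" using j by (simp add: x_def)
  thus ?thesis by auto
qed



lemma tu_circuit_ratio:
  fixes M :: "real^'e::finite^'r::finite"
  assumes TU: "totally_unimodular M" and y: "M *v y = 0" and y0: "y $ e0 \<noteq> 0"
    and minimal: "\<forall>z. M *v z = 0 \<longrightarrow> z \<noteq> 0 \<longrightarrow> \<not> supp z \<subset> supp y"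
  shows "y $ e / y $ e0 \<in> {-1,0,1}"
proof -
  define C where "C = supp y - {e0}"
  define k where "k = card C"
  obtain g where g: "bij_betw g {0..<k} C"
    using ex_bij_betw_nat_finite[of C] unfolding k_def by auto
  have ginj: "inj_on g {..<k}" and gim: "g ` {..<k} = C"
    using g by (auto simp: bij_betw_def lessThan_atLeast0)
  have e0C: "e0 \<notin> g ` {..<k}" using gim C_def by auto
  have indep: "\<forall>w. (\<Sum>j<k. w j *\<^sub>R column (g j) M) = 0 \<longrightarrow> (\<forall>j<k. w j = 0)"
  proof (intro allI impI)
    fix w :: "nat \<Rightarrow> real" and j0
    assume sw: "(\<Sum>j<k. w j *\<^sub>R column (g j) M) = 0" and j0k: "j0 < k"
    show "w j0 = 0"
    proof (rule ccontr)
    assume "w j0 \<noteq> 0"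
    with j0k have j0: "j0 < k" "w j0 \<noteq> 0" by auto
    define z where "z = (\<chi> e. if e \<in> C then w (inv_into {..<k} g e) else 0)"
    have "M *v z = (\<Sum>e\<in>UNIV. (z $ e) *s column e M)" by (rule matrix_mult_sum)
    also have "\<dots> = (\<Sum>e\<in>C. w (inv_into {..<k} g e) *\<^sub>R column e M)"
      by (rule sum.mono_neutral_cong_right) (auto simp: z_def scalar_mult_eq_scaleR)
    also have "\<dots> = (\<Sum>j<k. w (inv_into {..<k} g (g j)) *\<^sub>R column (g j) M)"
      unfolding gim[symmetric] by (rule sum.reindex[OF ginj, unfolded comp_def])
    also have "\<dots> = (\<Sum>j<k. w j *\<^sub>R column (g j) M)"
      by (rule sum.cong) (auto simp: inv_into_f_f[OF ginj])
    finally have Mz: "M *v z = 0" using sw by simp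
    have "z $ g j0 = w j0" using j0 gim by (auto simp: z_def inv_into_f_f[OF ginj])
    hence nz: "z \<noteq> 0" using j0 by auto
    have "supp z \<subseteq> C" by (auto simp: supp_def z_def)
    moreover have "e0 \<in> supp y" "e0 \<notin> C" using y0 by (auto simp: supp_def C_def)
    ultimately have "supp z \<subset> supp y" unfolding C_def by blast
    with minimal Mz nz show False by blast
  qed
  qed
  obtain f where f0: "Determinant.det (Matrix.mat k k (\<lambda>(i,j). column (g j) M $ f i)) \<noteq> 0"
    using row_select[OF indep] by blast
  have matf: "Matrix.mat k k (\<lambda>(i,j). column (g j) M $ f i) = Matrix.mat k k (\<lambda>(i,j). M $ f i $ g j)"
    by (simp add: column_def)
  have f: "Determinant.det (Matrix.mat k k (\<lambda>(i,j). M $ f i $ g j)) \<noteq> 0" using f0 matf by simp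
  have finj: "inj_on f {..<k}"
    by (rule det_inj[of k "\<lambda>r j. M $ r $ g j"]) (use f in simp)
  have suppy: "\<forall>e. e \<notin> insert e0 (g ` {..<k}) \<longrightarrow> y $ e = 0"
    using gim by (auto simp: C_def supp_def)
  show ?thesis
  proof (cases "e = e0")
    case True thus ?thesis using y0 by simp
  next
    case False
    show ?thesis
    proof (cases "e \<in> C")
      case True
      then obtain j where j: "j < k" "e = g j" using gim by auto
      show ?thesis using cramer_ratio[OF TU finj ginj e0C f y suppy y0 j(1)] j(2) by simp
    next
      case False
      hence "y $ e = 0" using \<open>e \<noteq> e0\<close> by (auto simp: C_def supp_def)
      thus ?thesis by simp
    qed
  qed
qed



lemma sign_trans_aux:
  fixes a b c :: real
  assumes "a * b > 0" "b * c > 0" shows "a * c > 0"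
  using assms by (auto simp: zero_less_mult_iff)

lemma conformal_exists:
  fixes M :: "real^'e::finite^'r::finite"
  assumes TU: "totally_unimodular M" and mu: "M *v \<mu> = 0" "\<mu> \<noteq> 0"
  shows "\<exists>\<nu>. M *v \<nu> = 0 \<and> \<nu> \<noteq> 0 \<and> (\<forall>e. \<nu> $ e \<in> {-1,0,1}) \<and> (\<forall>e. \<nu> $ e \<noteq> 0 \<longrightarrow> \<nu> $ e = sgn (\<mu> $ e))"
proof -
  define P where "P y \<longleftrightarrow> M *v y = 0 \<and> y \<noteq> 0 \<and> (\<forall>e. y $ e \<noteq> 0 \<longrightarrow> y $ e * \<mu> $ e > 0)" for y
  have "P \<mu>" using mu by (auto simp: P_def zero_less_mult_iff linorder_neq_iff)
  then obtain y where Py: "P y" and ymin: "\<forall>z. P z \<longrightarrow> card (supp y) \<le> card (supp z)"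
    using ex_has_least_nat[of P \<mu> "\<lambda>y. card (supp y)"] by blast
  have My: "M *v y = 0" and ynz: "y \<noteq> 0" and yconf: "\<And>e. y $ e \<noteq> 0 \<Longrightarrow> y $ e * \<mu> $ e > 0"
    using Py by (auto simp: P_def)
  have minimal: "\<forall>z. M *v z = 0 \<longrightarrow> z \<noteq> 0 \<longrightarrow> \<not> supp z \<subset> supp y"
  proof (intro allI impI notI)
    fix z assume Mz: "M *v z = 0" and nz: "z \<noteq> 0" and sub: "supp z \<subset> supp y"
    obtain e1 where ze1: "z $ e1 \<noteq> 0" using nz by (auto simp: Finite_Cartesian_Product.vec_eq_iff)
    have ye1: "y $ e1 \<noteq> 0" using sub ze1 by (auto simp: supp_def)
    define z' where "z' = (if y $ e1 / z $ e1 > 0 then z else -z)"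
    have Mz': "M *v z' = 0"
    proof -
      have "M *v (-z) = M *v ((-1) *\<^sub>R z)" by simp
      also have "\<dots> = 0" using Mz by (simp only: matrix_vector_mult_scaleR) simp
      finally show ?thesis using Mz by (simp add: z'_def)
    qed
    have supz': "supp z' = supp z" by (auto simp: z'_def supp_def)
    have e1Q: "z' $ e1 \<noteq> 0 \<and> y $ e1 / z' $ e1 > 0"
    proof (cases "y $ e1 / z $ e1 > 0")
      case True thus ?thesis using ze1 by (simp add: z'_def)
    next
      case False
      hence "y $ e1 / z $ e1 < 0" using ye1 ze1 by (simp add: linorder_not_less le_less)
      thus ?thesis using False ze1 by (simp add: z'_def)
    qed
    define Q where "Q = {e. z' $ e \<noteq> 0 \<and> y $ e / z' $ e > 0}"
    have Qfin: "finite Q" by simp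
    have e1in: "e1 \<in> Q" using e1Q by (simp add: Q_def)
    define t where "t = Min ((\<lambda>e. y $ e / z' $ e) ` Q)"
    have "t \<in> (\<lambda>e. y $ e / z' $ e) ` Q" unfolding t_def using Qfin e1in by (intro Min_in) auto
    then obtain e2 where e2Q: "e2 \<in> Q" and te2: "t = y $ e2 / z' $ e2" by auto
    have tle: "t \<le> y $ e / z' $ e" if "e \<in> Q" for e
      unfolding t_def using Qfin that by (intro Min_le) auto
    have tpos: "t > 0" using e2Q te2 by (simp add: Q_def)
    define y' where "y' = y - t *\<^sub>R z'"
    have My': "M *v y' = 0" unfolding y'_def
      by (simp add: matrix_vector_mult_diff_distrib matrix_vector_mult_scaleR My Mz')
    have y'e2: "y' $ e2 = 0" using e2Q te2 by (simp add: y'_def Q_def)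
    have z'y: "z' $ e \<noteq> 0 \<Longrightarrow> y $ e \<noteq> 0" for e using sub supz' by (auto simp: supp_def)
    have conf: "y' $ e * y $ e > 0" if ne: "y' $ e \<noteq> 0" for e
    proof (cases "z' $ e = 0")
      case True
      hence "y' $ e = y $ e" by (simp add: y'_def)
      thus ?thesis using ne by (auto simp: zero_less_mult_iff linorder_neq_iff)
    next
      case False
      define r where "r = y $ e / z' $ e"
      have yr: "y $ e = r * z' $ e" using False by (simp add: r_def)
      have y're: "y' $ e = (r - t) * z' $ e" by (simp add: y'_def yr algebra_simps)
      have rne: "r \<noteq> 0" using z'y[OF False] False by (simp add: r_def)
      have prod: "y' $ e * y $ e = ((r - t) * r) * (z' $ e * z' $ e)" by (simp add: y're yr algebra_simps)
      have zz: "z' $ e * z' $ e > 0" using False by (auto simp: zero_less_mult_iff linorder_neq_iff)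
      have "(r - t) * r > 0"
      proof (cases "r > 0")
        case True
        hence "e \<in> Q" using False by (simp add: Q_def r_def)
        hence "t \<le> r" using tle by (simp add: r_def)
        moreover have "r - t \<noteq> 0" using ne y're by auto
        ultimately show ?thesis using True by simp
      next
        case False
        hence "r < 0" using rne by simp
        thus ?thesis using tpos by (simp add: mult_neg_neg)
      qed
      thus ?thesis using prod zz by simp
    qed
    have y'nz: "y' \<noteq> 0"
    proof
      assume "y' = 0"
      hence yeq: "y = t *\<^sub>R z'" by (simp add: y'_def)
      hence "supp y = supp z'" using tpos by (auto simp: supp_def)
      thus False using sub supz' by simp
    qed
    have "P y'"
      unfolding P_def using My' y'nz conf yconf sign_trans_aux
      by (metis mult_zero_right order_less_irrefl)
    moreover have "supp y' \<subset> supp y"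
    proof -
      have "supp y' \<subseteq> supp y" using conf by (force simp: supp_def)
      moreover have "e2 \<in> supp y" "e2 \<notin> supp y'" using e2Q y'e2 by (auto simp: supp_def Q_def)
      ultimately show ?thesis by blast
    qed
    hence "card (supp y') < card (supp y)" by (intro psubset_card_mono) auto
    ultimately show False using ymin by fastforce
  qed
  obtain e0 where y0: "y $ e0 \<noteq> 0" using ynz by (auto simp: Finite_Cartesian_Product.vec_eq_iff)
  have ratio: "y $ e / y $ e0 \<in> {-1,0,1}" for e by (rule tu_circuit_ratio[OF TU My y0 minimal])
  define \<nu> where "\<nu> = (1 / \<bar>y $ e0\<bar>) *\<^sub>R y"
  have nue: "\<nu> $ e = (if y $ e0 > 0 then y $ e / y $ e0 else - (y $ e / y $ e0))" for e
    using y0 by (auto simp: \<nu>_def)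
  have nu1: "\<nu> $ e \<in> {-1,0,1}" for e using ratio[of e] by (auto simp: nue)
  have "M *v \<nu> = 0" by (simp add: \<nu>_def matrix_vector_mult_scaleR My)
  moreover have "\<nu> \<noteq> 0"
  proof
    assume "\<nu> = 0" hence "\<nu> $ e0 = 0" by simp
    thus False using y0 by (simp add: \<nu>_def)
  qed
  moreover have "\<nu> $ e = sgn (\<mu> $ e)" if ne: "\<nu> $ e \<noteq> 0" for e
  proof -
    have yne: "y $ e \<noteq> 0" using ne by (auto simp: \<nu>_def)
    have ym: "y $ e * \<mu> $ e > 0" using yconf[OF yne] .
    have yy: "y $ e * y $ e > 0" using yne by (auto simp: zero_less_mult_iff linorder_neq_iff)
    have nuy: "\<nu> $ e * y $ e > 0" using yy y0 by (simp add: \<nu>_def divide_pos_pos)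
    have nm: "\<nu> $ e * \<mu> $ e > 0" using sign_trans_aux[OF nuy ym] .
    have "\<nu> $ e = 1 \<or> \<nu> $ e = -1" using nu1[of e] ne by auto
    thus ?thesis using nm by (auto simp: zero_less_mult_iff sgn_if)
  qed
  ultimately show ?thesis using nu1 by blast
qed



lemma int3: "(a::real) \<in> {-1,0,1} \<Longrightarrow> a \<in> \<int>" by auto

definition l1 :: "real^'e::finite \<Rightarrow> real" where "l1 v = (\<Sum>e\<in>UNIV. \<bar>v $ e\<bar>)"

lemma norm_sq_l1:
  fixes v :: "real^'e::finite"
  assumes "\<forall>e. v $ e \<in> {-1,0,1}"
  shows "(norm v)^2 = l1 v"
proof -
  have "(norm v)^2 = (\<Sum>e\<in>UNIV. v $ e * v $ e)" by (simp add: power2_norm_eq_inner inner_vec_def)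
  also have "\<dots> = l1 v" unfolding l1_def
  proof (rule sum.cong[OF refl])
    fix e have "v $ e \<in> {-1,0,1}" using assms by blast
    thus "v $ e * v $ e = \<bar>v $ e\<bar>" by auto
  qed
  finally show ?thesis .
qed

lemma voronoi_ineq:
  assumes x: "x \<in> voronoi0 M" and nu: "\<nu> \<in> lattice_flows M"
  shows "2 * (x \<bullet> \<nu>) \<le> (norm \<nu>)^2"
proof -
  have "norm x \<le> norm (x - \<nu>)" using x nu by (auto simp: voronoi0_def)
  hence "(norm x)^2 \<le> (norm (x - \<nu>))^2" by (simp add: power_mono)
  thus ?thesis by (simp add: power2_norm_eq_inner inner_diff_left inner_diff_right inner_commute)
qed

lemma l1_bound:
  fixes M :: "real^'e::finite^'r::finite"
  assumes TU: "totally_unimodular M" and x: "x \<in> voronoi0 M" and mu: "\<mu> \<in> lattice_flows M"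
  shows "2 * (x \<bullet> \<mu>) \<le> l1 \<mu>"
proof -
  have "\<forall>\<mu>. \<mu> \<in> lattice_flows M \<longrightarrow> l1 \<mu> \<le> real n \<longrightarrow> 2 * (x \<bullet> \<mu>) \<le> l1 \<mu>" for n
  proof (induction n)
    case 0
    show ?case
    proof (intro allI impI)
      fix \<mu> :: "real^'e" assume "\<mu> \<in> lattice_flows M" "l1 \<mu> \<le> real 0"
      hence "\<forall>e\<in>UNIV. \<bar>\<mu> $ e\<bar> = 0" unfolding l1_def
        by (subst sum_nonneg_eq_0_iff[symmetric]) (auto intro: antisym sum_nonneg)
      hence "\<mu> = 0" by (auto simp: Finite_Cartesian_Product.vec_eq_iff)
      thus "2 * (x \<bullet> \<mu>) \<le> l1 \<mu>" by (simp add: l1_def)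
    qed
  next
    case (Suc n)
    show ?case
    proof (intro allI impI)
      fix \<mu> :: "real^'e" assume mu: "\<mu> \<in> lattice_flows M" and le: "l1 \<mu> \<le> real (Suc n)"
      show "2 * (x \<bullet> \<mu>) \<le> l1 \<mu>"
      proof (cases "\<mu> = 0")
        case True thus ?thesis by (simp add: l1_def)
      next
        case False
        have Mmu: "M *v \<mu> = 0" and muZ: "\<And>e. \<mu> $ e \<in> \<int>" using mu by (auto simp: lattice_flows_def flows_def)
        obtain \<nu> where Mnu: "M *v \<nu> = 0" and nunz: "\<nu> \<noteq> 0" and nu1: "\<forall>e. \<nu> $ e \<in> {-1,0,1}"
          and nus: "\<forall>e. \<nu> $ e \<noteq> 0 \<longrightarrow> \<nu> $ e = sgn (\<mu> $ e)"
          using conformal_exists[OF TU Mmu False] by blast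
        have nuL: "\<nu> \<in> lattice_flows M" using Mnu nu1 int3 by (auto simp: lattice_flows_def flows_def)
        have dL: "\<mu> - \<nu> \<in> lattice_flows M" using Mmu Mnu muZ nu1 int3
          by (auto simp: lattice_flows_def flows_def matrix_vector_mult_diff_distrib intro!: Ints_diff)
        have comp: "\<bar>\<mu> $ e - \<nu> $ e\<bar> = \<bar>\<mu> $ e\<bar> - \<bar>\<nu> $ e\<bar>" for e
        proof (cases "\<nu> $ e = 0")
          case True thus ?thesis by simp
        next
          case False
          hence ns: "\<nu> $ e = sgn (\<mu> $ e)" using nus by blast
          hence "\<mu> $ e \<noteq> 0" using False by auto
          hence "1 \<le> \<bar>\<mu> $ e\<bar>" using Ints_nonzero_abs_ge1[OF muZ] by blast
          thus ?thesis using ns by (auto simp: sgn_if abs_if)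
        qed
        have l1d: "l1 (\<mu> - \<nu>) = l1 \<mu> - l1 \<nu>" unfolding l1_def by (simp add: comp sum_subtractf)
        obtain e1 where "\<nu> $ e1 \<noteq> 0" using nunz by (auto simp: Finite_Cartesian_Product.vec_eq_iff)
        hence "\<bar>\<nu> $ e1\<bar> = 1" using spec[OF nu1, of e1] by auto
        hence "1 \<le> l1 \<nu>" unfolding l1_def
          using member_le_sum[of e1 UNIV "\<lambda>e. \<bar>\<nu> $ e\<bar>"] by simp
        hence "l1 (\<mu> - \<nu>) \<le> real n" using le l1d by simp
        hence IH: "2 * (x \<bullet> (\<mu> - \<nu>)) \<le> l1 (\<mu> - \<nu>)" using Suc.IH dL by blast
        have "2 * (x \<bullet> \<nu>) \<le> l1 \<nu>" using voronoi_ineq[OF x nuL] norm_sq_l1[OF nu1] by simp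
        thus ?thesis using IH l1d by (simp add: inner_diff_right)
      qed
    qed
  qed
  moreover obtain n where "l1 \<mu> \<le> real n" using real_arch_simple by blast
  ultimately show ?thesis using mu by blast
qed



lemma abs_sum_same_sign:
  fixes f :: "'a \<Rightarrow> real"
  assumes fin: "finite G" and ss: "\<forall>a\<in>G. \<forall>b\<in>G. f a * f b \<ge> 0"
  shows "\<bar>\<Sum>a\<in>G. f a\<bar> = (\<Sum>a\<in>G. \<bar>f a\<bar>)"
proof (cases "\<exists>a\<in>G. f a > 0")
  case True
  then obtain a where a: "a \<in> G" "f a > 0" by blast
  have pos: "\<forall>b\<in>G. f b \<ge> 0"
  proof
    fix b assume "b \<in> G"
    hence "f a * f b \<ge> 0" using ss a by blast
    thus "f b \<ge> 0" using a by (simp add: zero_le_mult_iff)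
  qed
  hence "(\<Sum>a\<in>G. f a) \<ge> 0" by (simp add: sum_nonneg)
  moreover have "(\<Sum>a\<in>G. \<bar>f a\<bar>) = (\<Sum>a\<in>G. f a)" using pos by (intro sum.cong) auto
  ultimately show ?thesis by simp
next
  case False
  hence neg: "\<forall>b\<in>G. f b \<le> 0" by auto
  hence "(\<Sum>a\<in>G. f a) \<le> 0" by (simp add: sum_nonpos)
  moreover have "(\<Sum>a\<in>G. \<bar>f a\<bar>) = - (\<Sum>a\<in>G. f a)" using neg
    by (simp add: sum_negf[symmetric])
  ultimately show ?thesis by simp
qed

lemma circ_vals: "\<gamma> \<in> circuits M \<Longrightarrow> \<gamma> $ e \<in> {-1,0,1}"
  by (auto simp: circuits_def)

lemma circ_lat: "\<gamma> \<in> circuits M \<Longrightarrow> \<gamma> \<in> lattice_flows M"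
  by (auto simp: circuits_def)

lemma circ_conf:
  fixes M :: "real^'e::finite^'r::finite"
  assumes TU: "totally_unimodular M" and x: "x \<in> voronoi0 M"
    and g1: "\<gamma> \<in> circuits M" and g2: "\<gamma>' \<in> circuits M"
    and h1: "x \<in> hyperplane_F M \<gamma>" and h2: "x \<in> hyperplane_F M \<gamma>'"
  shows "\<gamma> $ e * \<gamma>' $ e \<ge> 0"
proof (rule ccontr)
  assume neg: "\<not> ?thesis"
  have v1: "\<forall>e. \<gamma> $ e \<in> {-1,0,1}" and v2: "\<forall>e. \<gamma>' $ e \<in> {-1,0,1}"
    using circ_vals[OF g1] circ_vals[OF g2] by auto
  have L1: "\<gamma> \<in> lattice_flows M" and L2: "\<gamma>' \<in> lattice_flows M" using g1 g2 circ_lat by auto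
  have L: "\<gamma> + \<gamma>' \<in> lattice_flows M" using L1 L2
    by (auto simp: lattice_flows_def flows_def matrix_vector_right_distrib intro!: Ints_add)
  have "2 * (x \<bullet> (\<gamma> + \<gamma>')) = l1 \<gamma> + l1 \<gamma>'"
    using h1 h2 norm_sq_l1[OF v1] norm_sq_l1[OF v2] by (simp add: hyperplane_F_def inner_add_right)
  moreover have "l1 (\<gamma> + \<gamma>') < l1 \<gamma> + l1 \<gamma>'"
  proof -
    have "l1 (\<gamma> + \<gamma>') = (\<Sum>e\<in>UNIV. \<bar>\<gamma> $ e + \<gamma>' $ e\<bar>)" by (simp add: l1_def)
    also have "\<dots> < (\<Sum>e\<in>UNIV. \<bar>\<gamma> $ e\<bar> + \<bar>\<gamma>' $ e\<bar>)"
    proof (rule sum_strict_mono_ex1)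
      show "\<forall>e\<in>UNIV. \<bar>\<gamma> $ e + \<gamma>' $ e\<bar> \<le> \<bar>\<gamma> $ e\<bar> + \<bar>\<gamma>' $ e\<bar>" by (simp add: abs_triangle_ineq)
      have "\<gamma> $ e \<in> {-1,0,1}" "\<gamma>' $ e \<in> {-1,0,1}" using v1 v2 by blast+
      hence "\<bar>\<gamma> $ e + \<gamma>' $ e\<bar> < \<bar>\<gamma> $ e\<bar> + \<bar>\<gamma>' $ e\<bar>" using neg by auto
      thus "\<exists>e\<in>UNIV. \<bar>\<gamma> $ e + \<gamma>' $ e\<bar> < \<bar>\<gamma> $ e\<bar> + \<bar>\<gamma>' $ e\<bar>" by blast
    qed simp
    also have "\<dots> = l1 \<gamma> + l1 \<gamma>'" by (simp add: l1_def sum.distrib)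
    finally show ?thesis .
  qed
  ultimately show False using l1_bound[OF TU x L] by simp
qed



theorem mainTheorem13:
  fixes M :: "real^'e::finite^'r::finite" and F :: "(real^'e) set" and lam :: "real^'e"
  assumes "totally_unimodular M"
    and "F face_of voronoi0 M" and "F \<noteq> {}"
    and "lam \<in> circuits M"
  shows "lam \<in> U_face M F \<longleftrightarrow> sc_le (phi M F) (N_of lam)"
proof -
  note TU = assms(1)
  have FV: "F \<subseteq> voronoi0 M" using face_of_imp_subset[OF assms(2)] .
  obtain x0 where x0: "x0 \<in> F" using assms(3) by blast
  define U where "U = U_face M F"
  define S where "S = (\<Union>\<gamma>\<in>U. supp \<gamma>)"
  define ch where "ch e = (SOME \<gamma>. \<gamma> \<in> U \<and> e \<in> supp \<gamma>)" for e
  have phi_eq: "phi M F = (S, \<lambda>e. if e \<in> S then sgn (ch e $ e) else 0)"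
    unfolding phi_def U_def S_def ch_def by simp
  have conf: "\<gamma> $ e * \<gamma>' $ e \<ge> 0" if "\<gamma> \<in> U" "\<gamma>' \<in> U" for \<gamma> \<gamma>' e
  proof -
    have c: "\<gamma> \<in> circuits M" "F \<subseteq> hyperplane_F M \<gamma>" "\<gamma>' \<in> circuits M" "F \<subseteq> hyperplane_F M \<gamma>'"
      using that unfolding U_def U_face_def by blast+
    have "x0 \<in> voronoi0 M" using x0 FV by blast
    from circ_conf[OF TU this c(1) c(3)] c(2,4) x0 show ?thesis by blast
  qed
  have chU: "ch e \<in> U \<and> e \<in> supp (ch e)" if eS0: "e \<in> S" for e
  proof -
    obtain \<gamma> where "\<gamma> \<in> U" "e \<in> supp \<gamma>" using eS0 unfolding S_def by blast
    hence "\<gamma> \<in> U \<and> e \<in> supp \<gamma>" by blast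
    thus ?thesis unfolding ch_def by (rule someI)
  qed
  have sc: "sc_le (phi M F) (N_of lam) \<longleftrightarrow> supp lam \<subseteq> S \<and>
      (\<forall>e\<in>supp lam. sgn (lam $ e) = (if e \<in> S then sgn (ch e $ e) else 0))"
    by (simp add: phi_eq sc_le_def N_of_def)
  have sgn_prod: "sgn a = sgn b" if "a * b > 0" for a b :: real
    using that by (auto simp: sgn_if zero_less_mult_iff)
  have hypU: "2 * (x \<bullet> \<gamma>) = l1 \<gamma>" if "\<gamma> \<in> U" "x \<in> F" for x \<gamma>
  proof -
    have "x \<in> hyperplane_F M \<gamma>" "\<gamma> \<in> circuits M" using that by (auto simp: U_def U_face_def)
    thus ?thesis using norm_sq_l1[of \<gamma>] circ_vals[of \<gamma> M] by (auto simp: hyperplane_F_def)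
  qed
  show ?thesis unfolding sc U_def[symmetric]
  proof
    assume lU: "lam \<in> U"
    have sub: "supp lam \<subseteq> S" using lU by (auto simp: S_def)
    moreover have "\<forall>e\<in>supp lam. sgn (lam $ e) = (if e \<in> S then sgn (ch e $ e) else 0)"
    proof
      fix e assume e: "e \<in> supp lam"
      hence eS: "e \<in> S" using sub by auto
      have "ch e $ e * lam $ e \<ge> 0" using conf chU[OF eS] lU by blast
      moreover have "ch e $ e \<noteq> 0" "lam $ e \<noteq> 0" using chU[OF eS] e by (auto simp: supp_def)
      ultimately have "ch e $ e * lam $ e > 0" by (simp add: less_le)
      thus "sgn (lam $ e) = (if e \<in> S then sgn (ch e $ e) else 0)" using eS sgn_prod by simp
    qed
    ultimately show "supp lam \<subseteq> S \<and> (\<forall>e\<in>supp lam. sgn (lam $ e) = (if e \<in> S then sgn (ch e $ e) else 0))"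
      by blast
  next
    assume "supp lam \<subseteq> S \<and> (\<forall>e\<in>supp lam. sgn (lam $ e) = (if e \<in> S then sgn (ch e $ e) else 0))"
    hence sub: "supp lam \<subseteq> S" and sg: "\<And>e. e \<in> supp lam \<Longrightarrow> sgn (lam $ e) = sgn (ch e $ e)"
      by auto
    have lamC: "lam \<in> circuits M" using assms(4) .
    have lam1: "\<forall>e. lam $ e \<in> {-1,0,1}" using circ_vals[OF lamC] by auto
    have hyp: "x \<in> hyperplane_F M lam" if xF: "x \<in> F" for x
    proof -
      have xV: "x \<in> voronoi0 M" using FV xF by auto
      define G where "G = ch ` supp lam"
      have Gfin: "finite G" by (simp add: G_def)
      have GU: "G \<subseteq> U" using chU sub by (auto simp: G_def)
      define \<sigma> where "\<sigma> = (\<Sum>\<gamma>\<in>G. \<gamma>)"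
      have se: "\<sigma> $ e = (\<Sum>\<gamma>\<in>G. \<gamma> $ e)" for e by (simp add: \<sigma>_def)
      have absS: "\<bar>\<sigma> $ e\<bar> = (\<Sum>\<gamma>\<in>G. \<bar>\<gamma> $ e\<bar>)" for e
        unfolding se using abs_sum_same_sign[OF Gfin, of "\<lambda>\<gamma>. \<gamma> $ e"] conf GU by blast
      have xs: "2 * (x \<bullet> \<sigma>) = l1 \<sigma>"
      proof -
        have "2 * (x \<bullet> \<sigma>) = (\<Sum>\<gamma>\<in>G. 2 * (x \<bullet> \<gamma>))"
          by (simp add: \<sigma>_def inner_sum_right sum_distrib_left)
        also have "\<dots> = (\<Sum>\<gamma>\<in>G. l1 \<gamma>)" using hypU xF GU by (intro sum.cong) auto
        also have "\<dots> = (\<Sum>\<gamma>\<in>G. \<Sum>e\<in>UNIV. \<bar>\<gamma> $ e\<bar>)" by (simp add: l1_def)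
        also have "\<dots> = (\<Sum>e\<in>UNIV. \<Sum>\<gamma>\<in>G. \<bar>\<gamma> $ e\<bar>)" by (rule sum.swap)
        also have "\<dots> = l1 \<sigma>" by (simp add: l1_def absS)
        finally show ?thesis .
      qed
      have Gflow: "\<And>\<gamma>. \<gamma> \<in> G \<Longrightarrow> \<gamma> \<in> lattice_flows M"
        using GU circ_lat by (auto simp: U_def U_face_def)
      have MS: "M *v (\<Sum>\<gamma>\<in>H. \<gamma>) = 0" if "H \<subseteq> G" for H
      proof -
        have "finite H" using Gfin that finite_subset by blast
        thus ?thesis using that
        proof (induction H rule: finite_induct)
          case empty thus ?case by simp
        next
          case (insert a H)
          hence "M *v a = 0" using Gflow by (auto simp: lattice_flows_def flows_def)
          thus ?case using insert by (simp add: matrix_vector_right_distrib)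
        qed
      qed
      have sZ: "\<sigma> $ e \<in> \<int>" for e
        unfolding se using Gflow by (intro Ints_sum) (auto simp: lattice_flows_def)
      have dL: "\<sigma> - lam \<in> lattice_flows M"
        using MS[of G] sZ circ_lat[OF lamC] unfolding \<sigma>_def[symmetric]
        by (auto simp: lattice_flows_def flows_def matrix_vector_mult_diff_distrib intro!: Ints_diff)
      have comp: "\<bar>\<sigma> $ e - lam $ e\<bar> = \<bar>\<sigma> $ e\<bar> - \<bar>lam $ e\<bar>" for e
      proof (cases "lam $ e = 0")
        case True thus ?thesis by simp
      next
        case False
        hence e: "e \<in> supp lam" by (simp add: supp_def)
        hence eS: "e \<in> S" using sub by auto
        let ?g = "ch e"
        have gG: "?g \<in> G" using e by (simp add: G_def)
        have gne: "?g $ e \<noteq> 0" using chU[OF eS] by (simp add: supp_def)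
        have "\<sigma> $ e * ?g $ e = (\<Sum>\<gamma>\<in>G. \<gamma> $ e * ?g $ e)" by (simp add: se sum_distrib_right)
        also have "\<dots> \<ge> ?g $ e * ?g $ e"
          using member_le_sum[of ?g G "\<lambda>\<gamma>. \<gamma> $ e * ?g $ e"] gG Gfin conf GU by auto
        finally have "\<sigma> $ e * ?g $ e \<ge> ?g $ e * ?g $ e" .
        moreover have "?g $ e * ?g $ e > 0" using gne by (auto simp: zero_less_mult_iff linorder_neq_iff)
        ultimately have sg1: "\<sigma> $ e * ?g $ e > 0" by linarith
        have "sgn (\<sigma> $ e) = sgn (?g $ e)" using sgn_prod[OF sg1] .
        hence ss: "sgn (\<sigma> $ e) = sgn (lam $ e)" using sg[OF e] by simp
        have "\<sigma> $ e \<noteq> 0" using sg1 by auto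
        hence ge1: "1 \<le> \<bar>\<sigma> $ e\<bar>" using Ints_nonzero_abs_ge1[OF sZ] by blast
        have "lam $ e \<in> {-1,1}" using spec[OF lam1, of e] False by auto
        thus ?thesis using ss ge1 by (auto simp: sgn_if abs_if split: if_splits)
      qed
      have l1d: "l1 (\<sigma> - lam) = l1 \<sigma> - l1 lam" unfolding l1_def by (simp add: comp sum_subtractf)
      have "2 * (x \<bullet> (\<sigma> - lam)) \<le> l1 (\<sigma> - lam)" by (rule l1_bound[OF TU xV dL])
      hence lo: "l1 lam \<le> 2 * (x \<bullet> lam)" using xs l1d by (simp add: inner_diff_right)
      have hi: "2 * (x \<bullet> lam) \<le> (norm lam)^2" using voronoi_ineq[OF xV circ_lat[OF lamC]] .
      have "(norm lam)^2 = l1 lam" using norm_sq_l1[OF lam1] .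
      hence "2 * (x \<bullet> lam) = (norm lam)^2" using lo hi by simp
      moreover have "x \<in> flows M" using xV by (simp add: voronoi0_def)
      ultimately show ?thesis by (simp add: hyperplane_F_def)
    qed
    show "lam \<in> U" unfolding U_def U_face_def using lamC hyp by blast
  qed
qed


end
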